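(* Let $m \equiv 3 \pmod 4$ with $m > 3$, $n = 3^m - 1$, $v = (3^{(m-1)/2}-1)/2$ and $\delta = (3^{(m-1)/2}+11)/2$. Then $\gcd(v,n) = 1$, and, setting $T_{(1,2,m)}(v) = \{ vi \bmod n : i \in T_{(1,2,m)}\}$, we have $\{1, 2, \ldots, \delta-1\} \subseteq T_{(1,2,m)}(v)$.
   Context: For an integer $0 \le j \le n-1$ with $3$-adic expansion $j = \sum_{t=0}^{m-1} j_t 3^t$, $j_t \in \{0,1,2\}$, let $w_3(j) = \sum_{t=0}^{m-1} j_t$. For distinct $i_1,i_2 \in \{0,1,2,3\}$, $T_{(i_1,i_2,m)} = \{1 \le j \le n-1 : w_3(j) \equiv i_1 \text{ or } i_2 \pmod 4\}$. For an integer $b$, $b \bmod n$ is the unique $b_0 \in \{0,\ldots,n-1\}$ with $b \equiv b_0 \pmod n$. *)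

theory Defs
  imports Main
begin

fun w3 :: "nat \<Rightarrow> nat" where
  "w3 j = (if j = 0 then 0 else j mod 3 + w3 (j div 3))"

definition T_set :: "nat \<Rightarrow> nat \<Rightarrow> nat \<Rightarrow> nat set" where
  "T_set i1 i2 m = {j. 1 \<le> j \<and> j \<le> 3^m - 2 \<and> (w3 j mod 4 = i1 mod 4 \<or> w3 j mod 4 = i2 mod 4)}"

end

theory Submission
  imports Defs
begin

declare w3.simps[simp del]

lemma w3_0[simp]: "w3 0 = 0" by (subst w3.simps) simp

lemma w3_pos: "j \<noteq> 0 \<Longrightarrow> w3 j = j mod 3 + w3 (j div 3)"
  by (subst w3.simps) simp

lemma w3_3: "r < 3 \<Longrightarrow> w3 (3*q + r) = w3 q + r"
  by (cases "3*q+r = 0") (auto simp: w3_pos)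

lemma w3_concat: "B < 3^k \<Longrightarrow> w3 (A*3^k + B) = w3 A + w3 B"
proof (induction k arbitrary: B)
  case 0
  then show ?case by simp
next
  case (Suc k)
  have e: "A*3^Suc k + B = 3*(A*3^k + B div 3) + B mod 3" by simp
  have "B div 3 < 3^k" using Suc.prems by simp
  then have "w3 (A*3^k + B div 3) = w3 A + w3 (B div 3)" using Suc.IH by blast
  moreover have "w3 B = w3 (B div 3) + B mod 3"
    using w3_3[of "B mod 3" "B div 3"] by simp
  moreover have "w3 (3*(A*3^k + B div 3) + B mod 3) = w3 (A*3^k + B div 3) + B mod 3"
    by (rule w3_3) simp
  ultimately show ?case by (subst e) linarith
qed

lemma par_aux: "(w::nat) mod 2 = q mod 2 \<Longrightarrow> (r + w) mod 2 = (3*q + r) mod 2"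
  by presburger

lemma w3_parity: "w3 j mod 2 = j mod 2"
proof (induction j rule: less_induct)
  case (less j)
  show ?case
  proof (cases "j = 0")
    case True then show ?thesis by simp
  next
    case False
    have e: "w3 j = j mod 3 + w3 (j div 3)" using w3_pos[OF False] .
    have lt: "j div 3 < j" using False by simp
    have "w3 (j div 3) mod 2 = (j div 3) mod 2" using less.IH[OF lt] .
    then have "(j mod 3 + w3 (j div 3)) mod 2 = (3*(j div 3) + j mod 3) mod 2" by (rule par_aux)
    then show ?thesis unfolding e by simp
  qed
qed

lemma w3_suc: "j mod 3 \<noteq> 2 \<Longrightarrow> w3 (j+1) = w3 j + 1"
proof -
  assume a: "j mod 3 \<noteq> 2"
  have eq: "3*(j div 3) + (j mod 3 + 1) = j + 1" by simp
  have lt: "j mod 3 + 1 < 3" using a by simp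
  have "w3 (3*(j div 3) + (j mod 3 + 1)) = w3 (j div 3) + (j mod 3 + 1)"
    using lt by (rule w3_3)
  then have h1: "w3 (j+1) = w3 (j div 3) + (j mod 3 + 1)" unfolding eq .
  have h2: "w3 j = w3 (j div 3) + j mod 3" using w3_pos[of j] by (cases "j = 0") auto
  show ?thesis using h1 h2 by linarith
qed

lemma key_mod:
  fixes n v P X Y a r x :: nat
  assumes "n = 2*(v*(3*P+3)+1)" "X = 2*Y" "X + a = r*v" "x = X*(3*P+3) + r" "a < n"
  shows "(v*x) mod n = a"
proof -
  define c where "c = v*(3*P+3)"
  have "v*x = X*c + r*v" unfolding c_def assms(4) by (simp add: algebra_simps)
  also have "\<dots> = 2*Y*c + 2*Y + a" using assms(2,3) by simp
  also have "\<dots> = Y*n + a" unfolding assms(1) c_def[symmetric] by (simp add: algebra_simps)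
  finally have "v*x = Y*n + a" .
  then show ?thesis using assms(5) by simp
qed

lemma w3_two:
  fixes X r h :: nat
  assumes "3*X + r < 3^Suc h"
  shows "w3 (X*3^Suc h + (3*X + r)) = w3 X + w3 (3*X+r)"
  using assms by (rule w3_concat)

lemma memb:
  fixes m n v P h X Y a r :: nat
  assumes m: "m = 2*h+1" and P: "P = 3^h" and vP: "2*v+1 = P" and n: "n = 3^m - 1"
    and nv: "n = 2*(v*(3*P+3)+1)"
    and XY: "X = 2*Y" and Xa: "X + a = r*v" and r1: "1 \<le> r" and r3: "r \<le> 3"
    and Xb: "X + 2 < P"
    and rm: "r = 3 \<Longrightarrow> X mod 3 \<noteq> 2"
  shows "a \<in> (\<lambda>i. (v*i) mod n) ` T_set 1 2 m"
proof
  define x where "x = X*(3*P+3)+r"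
  have "r*v \<le> 3*v" using r3 by simp
  moreover have "3*v \<le> v*(3*P+3)" by (simp add: algebra_simps)
  moreover have "a \<le> r*v" using Xa by (metis le_add2)
  ultimately have "a \<le> v*(3*P+3)" by linarith
  then have an: "a < n" using nv by simp
  show "a = (v*x) mod n" using key_mod[OF nv XY Xa x_def an] by simp
  have m3: "(3::nat)^m = 3*P*P" unfolding m P by (simp only: mult_2 power_add power_one_right)
  have "(X+3)*(3*P+3) \<le> P*(3*P+3)" using Xb by (intro mult_le_mono1) linarith
  then have "x + 2 \<le> 3*P*P" unfolding x_def using r3 by (simp add: algebra_simps)
  then have xb: "x \<le> 3^m - 2" using m3 by linarith
  have x1: "1 \<le> x" unfolding x_def using r1 by linarith
  have P3: "3^Suc h = 3*P" using P by simp
  have wX: "w3 X mod 2 = 0" using w3_parity[of X] XY by simp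
  define s where "s = (if r = 3 then 1 else r)"
  have s12: "s = 1 \<or> s = 2" unfolding s_def using r1 r3 by auto
  have wx: "w3 x = 2 * w3 X + s"
  proof (cases "r = 3")
    case True
    have e: "x = X*3^Suc h + (3*(X+1) + 0)" unfolding x_def P3 True by (simp add: algebra_simps)
    have "3*(X+1) + 0 < 3^Suc h" using Xb P3 by simp
    then have "w3 x = w3 X + w3 (3*(X+1) + 0)" unfolding e by (rule w3_concat)
    also have "w3 (3*(X+1) + 0) = w3 (X+1) + 0" by (rule w3_3) simp
    also have "w3 (X+1) = w3 X + 1" using rm True by (intro w3_suc) simp
    finally show ?thesis using True by (simp add: s_def)
  next
    case False
    then have rl: "r < 3" using r3 by simp
    have e: "x = X*3^Suc h + (3*X + r)" unfolding x_def P3 by (simp add: algebra_simps)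
    have "3*X + r < 3^Suc h" using Xb P3 rl by simp
    then have "w3 x = w3 X + w3 (3*X + r)" unfolding e by (rule w3_concat)
    also have "w3 (3*X + r) = w3 X + r" by (rule w3_3[OF rl])
    finally show ?thesis using False by (simp add: s_def)
  qed
  have "even (w3 X)" using wX by presburger
  then obtain t where t: "w3 X = 2*t" by (rule evenE)
  have "w3 x = 4*t + s" using wx t by linarith
  then have "w3 x mod 4 = s" using s12 by presburger
  then have "w3 x mod 4 = 1 \<or> w3 x mod 4 = 2" using s12 by simp
  then show "x \<in> T_set 1 2 m" unfolding T_set_def using x1 xb by simp
qed

lemma c2: assumes mh: "m = 2*h+1" and P_def: "P = 3^h" and vP: "2*v+1 = P" and n3: "n = 3^m - 1"
    and nv: "n = 2*(v*(3*P+3)+1)" and a: "1 \<le> a" "a \<le> v + 5" and True: "even a" and v13: "v \<ge> 13"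
  shows "a \<in> (\<lambda>i. (v * i) mod n) ` T_set 1 2 m"
proof -
    have Y: "2*v - a = 2*((2*v - a) div 2)" using True by presburger
    show ?thesis
      by (rule memb[OF mh P_def vP n3 nv Y, where r=2]) (use a True v13 vP in \<open>auto\<close>)
qed
lemma c1: assumes mh: "m = 2*h+1" and P_def: "P = 3^h" and vP: "2*v+1 = P" and n3: "n = 3^m - 1"
    and nv: "n = 2*(v*(3*P+3)+1)" and a: "1 \<le> a" and True: "a \<le> v" and False: "odd a" and vodd: "odd v" and v13: "v \<ge> 13"
  shows "a \<in> (\<lambda>i. (v * i) mod n) ` T_set 1 2 m"
proof -
      have Y: "v - a = 2*((v - a) div 2)" using True vodd False by presburger
      show ?thesis
        by (rule memb[OF mh P_def vP n3 nv Y, where r=1]) (use a True v13 vP in \<open>auto\<close>)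
qed
lemma c3: assumes mh: "m = 2*h+1" and P_def: "P = 3^h" and vP: "2*v+1 = P" and n3: "n = 3^m - 1"
    and nv: "n = 2*(v*(3*P+3)+1)" and a: "1 \<le> a" "a \<le> v + 5" and gt: "\<not> a \<le> v" and False: "odd a" and vodd: "odd v" and v13: "v \<ge> 13"
    and P3: "P mod 3 = 0" and P27: "P \<ge> 27"
  shows "a \<in> (\<lambda>i. (v * i) mod n) ` T_set 1 2 m"
proof -
      have aa: "a = v + 2 \<or> a = v + 4" using gt a False vodd by presburger
      have Y: "3*v - a = 2*((3*v - a) div 2)" using aa by presburger
      have "3*v - a = P - 3 \<or> 3*v - a = P - 5" using aa vP by auto
      moreover have "P - 3 = 3*(P div 3 - 1)" "P - 5 = 3*(P div 3 - 2) + 1"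
        using P3 P27 by presburger+
      ultimately have md: "(3*v - a) mod 3 \<noteq> 2" by auto
      show ?thesis
        by (rule memb[OF mh P_def vP n3 nv Y, where r=3]) (use a gt aa v13 vP md in \<open>auto\<close>)
qed
lemma nv_aux: "2*(v::nat)+1 = P \<Longrightarrow> 3*P*P = 2*(v*(3*P+3)+1) + 1"
  apply (simp only: eq_commute[of _ P]) by (simp add: algebra_simps)

lemma nv_aux2: "n = 3^m - 1 \<Longrightarrow> (3::nat)^m = 3*P*P \<Longrightarrow> 3*P*P = 2*(v*(3*P+3)+1) + 1 \<Longrightarrow> n = 2*(v*(3*P+3)+1)"
  by simp

lemma cop_aux: "odd (v::nat) \<Longrightarrow> gcd v (2*(v*c+1)) = 1"
proof -
  assume o: "odd v"
  have "gcd v (c*v + 1) = gcd v 1" by (rule gcd_add_mult)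
  then have "coprime v (v*c+1)" by (simp add: coprime_iff_gcd_eq_1 mult.commute)
  moreover have "coprime v 2" using o by simp
  ultimately have "coprime v (2*(v*c+1))" by (subst coprime_mult_right_iff) blast
  then show ?thesis by (simp add: coprime_iff_gcd_eq_1)
qed

theorem lemma4:
  fixes m n v \<delta> :: nat
  assumes "m mod 4 = 3" and "m > 3"
    and "n = 3^m - 1"
    and "v = (3^((m - 1) div 2) - 1) div 2"
    and "\<delta> = (3^((m - 1) div 2) + 11) div 2"
  shows "gcd v n = 1 \<and> {1..\<delta> - 1} \<subseteq> (\<lambda>i. (v * i) mod n) ` T_set 1 2 m"
proof -
  obtain k where mk: "m = 4*k+3" using assms(1) by (metis mod_div_mult_eq add.commute mult.commute)
  define h where "h = (m - 1) div 2"
  have hk: "h = 2*k+1" unfolding h_def mk by simp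
  have mh: "m = 2*h+1" unfolding mk hk by simp
  have k1: "k \<ge> 1" using assms(2) mk by simp
  define P where "P = (3::nat)^h"
  have P27: "P \<ge> 27"
  proof -
    have "(3::nat)^3 \<le> 3^h" using hk k1 by (intro power_increasing) auto
    then show ?thesis unfolding P_def by simp
  qed
  have P4: "P mod 4 = 3"
  proof -
    have "P = 3 * 9^k" unfolding P_def hk by (simp add: power_mult)
    moreover have "(9::nat)^k mod 4 = 1"
    proof -
      have "(9::nat)^k mod 4 = (9 mod 4)^k mod 4" by (rule power_mod[symmetric])
      then show ?thesis by simp
    qed
    ultimately show ?thesis by (simp add: mod_mult_right_eq[symmetric])
  qed
  have P3: "P mod 3 = 0" unfolding P_def hk by simp
  have vdef: "v = (P - 1) div 2" unfolding assms(4) P_def h_def by simp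
  have vP: "2*v+1 = P" using vdef P4 by presburger
  have vodd: "odd v" using vdef P4 by presburger
  have dv: "\<delta> = v + 6" unfolding assms(5) using vP P_def h_def by simp
  have n3: "n = 3^m - 1" by (fact assms(3))
  have m3: "(3::nat)^m = 3*P*P" unfolding mh P_def by (simp only: mult_2 power_add power_one_right)
  have nv: "n = 2*(v*(3*P+3)+1)" by (rule nv_aux2[OF n3 m3 nv_aux[OF vP]])
  have g: "gcd v n = 1" unfolding nv by (rule cop_aux[OF vodd])
  have v13: "v \<ge> 13" using vP P27 by linarith
  have sub: "a \<in> (\<lambda>i. (v * i) mod n) ` T_set 1 2 m" if a: "1 \<le> a" "a \<le> v + 5" for a
  proof (cases "even a")
    case True
    then show ?thesis using c2[OF mh P_def vP n3 nv a True v13] by blast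
  next
    case False
    show ?thesis
    proof (cases "a \<le> v")
      case True
      then show ?thesis using c1[OF mh P_def vP n3 nv a(1) True False vodd v13] by blast
    next
      case gt: False
      then show ?thesis using c3[OF mh P_def vP n3 nv a gt False vodd v13 P3 P27] by blast
    qed
  qed
  show ?thesis using g sub dv by auto
qed

end
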